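(* Let $\{\omega_k\}_{k\ge 0}$, $\omega_k=(Z_k,E_k,-\lambda_k)$, be generated by the iteration below with parameters $(W_k,\theta_k,\beta_k)$ ($\theta_k,\beta_k$ entrywise positive). Then for every $k\ge 0$ and every triple $\omega=(Z,E,-\lambda)\in\mathbb{R}^{d\times n}\times\mathbb{R}^{m\times n}\times\mathbb{R}^{m\times n}$, with $u=(Z,E)$ and $u_{k+1}=(Z_{k+1},E_{k+1})$, $$h(u)-h(u_{k+1})+\big\langle \omega-\omega_{k+1},\ \mathcal{F}_k(\omega_{k+1})+\mathcal{G}_k(E_k-E_{k+1})+\mathcal{H}_k(\omega_{k+1}-\omega_k)\big\rangle\ \ge 0 .$$
   Context: Let $A\in\mathbb{R}^{m\times d}$, $X\in\mathbb{R}^{m\times n}$, and let $f:\mathbb{R}^{d\times n}\to\mathbb{R}$, $g:\mathbb{R}^{m\times n}\to\mathbb{R}$ be convex. Consider the problem $\min_{Z,E} f(Z)+g(E)$ subject to $X=AZ+E$, and write $h(u)=f(Z)+g(E)$ for $u=(Z,E)$. Triples are written $\omega=(Z,E,-\lambda)$ with $\lambda\in\mathbb{R}^{m\times n}$ a Lagrange multiplier; the inner product of triples is the sum of the componentwise Frobenius inner products. $\circ$ is the entrywise (Hadamard) product, and for an entrywise positive matrix $\beta$, $\beta^{-1}$ denotes its entrywise reciprocal. For a matrix $M$ and entrywise positive $\theta$ of the same size, write $\tfrac{\theta}{2}\circ\|M\|_F^2:=\tfrac12\sum_{ij}\theta_{ij}M_{ij}^2$. Iteration (D-LADMM): given $(Z_k,E_k,\lambda_k)$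 and parameters $W_k\in\mathbb{R}^{m\times d}$, $\theta_k\in\mathbb{R}^{d\times n}$, $\beta_k\in\mathbb{R}^{m\times n}$ with $\theta_k,\beta_k$ entrywise positive, $Z_{k+1}=\arg\min_Z\{ f(Z)+\tfrac{\theta_k}{2}\circ\|Z-Z_k+\theta_k^{-1}\circ W_k^\top(\lambda_k+\beta_k\circ(AZ_k+E_k-X))\|_F^2\}$, $E_{k+1}=\arg\min_E\{g(E)+\tfrac{\beta_k}{2}\circ\|E-X+AZ_{k+1}+\beta_k^{-1}\circ\lambda_k\|_F^2\}$, $\lambda_{k+1}=\lambda_k+\beta_k\circ(AZ_{k+1}+E_{k+1}-X)$. Operators: $\mathcal{D}_k(Z)=\theta_k\circ Z-W_k^\top(\beta_k\circ(AZ))$; $\mathcal{H}_k(Z,E,-\lambda)=(\mathcal{D}_k(Z),\ \beta_k\circ E,\ \beta_k^{-1}\circ(-\lambda))$; $\mathcal{F}_k(Z,E,-\lambda)=(W_k^\top\lambda,\ \lambda,\ AZ+E-X)$; for $M\in\mathbb{R}^{m\times n}$, $\mathcal{G}_k(M)=(W_k^\top(\beta_k\circ M),\ \beta_k\circ M,\ 0)$. Standing assumption of the paper: for $\sigma\ge0$, $\mathcal{S}(\sigma,A)$ is the set of triples $(W,\theta,\beta)$ with $\|W-A\|\le\sigma$ (spectral norm), $\theta,\beta$ entrywise positive, and the linear operator $Z\mapsto\theta\circ Z-W^\top(\beta\circ(AZ))$ positive definite (i.e. $\langle \cdot(Z),Z\rangle>0$ for all $Z\ne0$); it is assumed that there is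 a constant $c$ such that $\mathcal{S}(\sigma,A)\neq\emptyset$ for all $0\le\sigma\le c$. *)

theory Defs
  imports "HOL-Analysis.Analysis"
begin

text \<open>Matrices in R^{r x c} are represented as real^'c^'r (row index outer).
  Frobenius inner product is the library inner product on nested vec types;
  inner product of triples (Z,E,-lambda) is the product-type inner product
  on nested pairs (Z,(E,-lambda)).\<close>

definition had :: "real^'c^'r \<Rightarrow> real^'c^'r \<Rightarrow> real^'c^'r"  (infixl "\<odot>" 70) where
  "had x y = (\<chi> i j. x $ i $ j * y $ i $ j)"

definition erecip :: "real^'c^'r \<Rightarrow> real^'c^'r" where
  "erecip x = (\<chi> i j. 1 / (x $ i $ j))"

definition epos :: "real^'c^'r \<Rightarrow> bool" where
  "epos x \<longleftrightarrow> (\<forall>i j. x $ i $ j > 0)"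

definition wsq :: "real^'c^'r \<Rightarrow> real^'c^'r \<Rightarrow> real" where
  "wsq \<theta> M = (1/2) * (\<Sum>i\<in>UNIV. \<Sum>j\<in>UNIV. \<theta> $ i $ j * (M $ i $ j)^2)"

definition Dop :: "real^'d^'m \<Rightarrow> real^'n^'d \<Rightarrow> real^'n^'m \<Rightarrow> real^'d^'m \<Rightarrow> real^'n^'d \<Rightarrow> real^'n^'d" where
  "Dop W \<theta> \<beta> A Z = \<theta> \<odot> Z - transpose W ** (\<beta> \<odot> (A ** Z))"

definition Hop :: "real^'d^'m \<Rightarrow> real^'n^'d \<Rightarrow> real^'n^'m \<Rightarrow> real^'d^'m
     \<Rightarrow> (real^'n^'d) \<times> (real^'n^'m) \<times> (real^'n^'m) \<Rightarrow> (real^'n^'d) \<times> (real^'n^'m) \<times> (real^'n^'m)" where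
  "Hop W \<theta> \<beta> A w = (Dop W \<theta> \<beta> A (fst w), \<beta> \<odot> fst (snd w), erecip \<beta> \<odot> snd (snd w))"

text \<open>F_k(Z,E,-lambda) = (W^T lambda, lambda, AZ+E-X); the third slot of a triple stores -lambda.\<close>
definition Fop :: "real^'d^'m \<Rightarrow> real^'d^'m \<Rightarrow> real^'n^'m
     \<Rightarrow> (real^'n^'d) \<times> (real^'n^'m) \<times> (real^'n^'m) \<Rightarrow> (real^'n^'d) \<times> (real^'n^'m) \<times> (real^'n^'m)" where
  "Fop W A X w = (transpose W ** (- snd (snd w)), - snd (snd w), A ** fst w + fst (snd w) - X)"

definition Gop :: "real^'d^'m \<Rightarrow> real^'n^'m \<Rightarrow> real^'n^'m
     \<Rightarrow> (real^'n^'d) \<times> (real^'n^'m) \<times> (real^'n^'m)" where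
  "Gop W \<beta> M = (transpose W ** (\<beta> \<odot> M), \<beta> \<odot> M, 0)"

end

theory Submission imports Defs begin
lemma had_erecip1: "epos b \<Longrightarrow> b \<odot> (erecip b \<odot> x) = x"
proof -
  assume h: "epos b"
  have "\<forall>i j. b$i$j \<noteq> 0" using h unfolding epos_def by (metis less_irrefl)
  then show ?thesis by (simp add: had_def erecip_def vec_eq_iff)
qed
lemma had_erecip2: "epos b \<Longrightarrow> erecip b \<odot> (b \<odot> x) = x"
proof -
  assume h: "epos b"
  have "\<forall>i j. b$i$j \<noteq> 0" using h unfolding epos_def by (metis less_irrefl)
  then show ?thesis by (simp add: had_def erecip_def vec_eq_iff)
qed
lemma inner_mat: "(x::real^'c^'r) \<bullet> y = (\<Sum>i\<in>UNIV. \<Sum>j\<in>UNIV. x$i$j * y$i$j)"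
  by (simp add: inner_vec_def)
lemma wsq_expand: "wsq \<theta> (M + t *\<^sub>R D) = wsq \<theta> M + t * ((\<theta> \<odot> M) \<bullet> D) + t^2 * wsq \<theta> D"
proof -
  have e: "\<And>i j. \<theta>$i$j * ((M + t *\<^sub>R D)$i$j)^2 = \<theta>$i$j*(M$i$j)^2 + 2*t*(\<theta>$i$j*M$i$j*D$i$j) + t^2*(\<theta>$i$j*(D$i$j)^2)"
    by (simp add: power2_eq_square algebra_simps)
  have "wsq \<theta> (M + t *\<^sub>R D) = (1/2) * (\<Sum>i\<in>UNIV. \<Sum>j\<in>UNIV. \<theta>$i$j*(M$i$j)^2 + 2*t*(\<theta>$i$j*M$i$j*D$i$j) + t^2*(\<theta>$i$j*(D$i$j)^2))"
    unfolding wsq_def e ..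
  also have "\<dots> = (1/2) * (\<Sum>i\<in>UNIV. \<Sum>j\<in>UNIV. \<theta>$i$j*(M$i$j)^2) + t * (\<Sum>i\<in>UNIV. \<Sum>j\<in>UNIV. \<theta>$i$j*M$i$j*D$i$j) + t^2 * ((1/2) * (\<Sum>i\<in>UNIV. \<Sum>j\<in>UNIV. \<theta>$i$j*(D$i$j)^2))"
    by (simp only: sum.distrib sum_distrib_left[symmetric] distrib_left mult.assoc)
  also have "(\<Sum>i\<in>UNIV. \<Sum>j\<in>UNIV. \<theta>$i$j*M$i$j*D$i$j) = (\<theta> \<odot> M) \<bullet> D"
    by (simp add: inner_mat had_def)
  finally show ?thesis unfolding wsq_def .
qed

lemma had_add_right: "a \<odot> (x + y) = a \<odot> x + a \<odot> (y::real^'c^'r)"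
  by (simp add: had_def vec_eq_iff algebra_simps)
lemma had_diff_right: "a \<odot> (x - y) = a \<odot> x - a \<odot> (y::real^'c^'r)"
  by (simp add: had_def vec_eq_iff algebra_simps)
lemma had_minus_right: "a \<odot> (- y) = - (a \<odot> (y::real^'c^'r))"
  by (simp add: had_def vec_eq_iff algebra_simps)
lemma mm_diff: "(A::real^'n^'m) ** (B - C) = A ** B - A ** (C::real^'p^'n)"
  by (simp add: matrix_matrix_mult_def vec_eq_iff algebra_simps sum_subtractf)
lemma mm_minus: "(A::real^'n^'m) ** (- B) = - (A ** (B::real^'p^'n))"
  by (simp add: matrix_matrix_mult_def vec_eq_iff sum_negf)

lemma wsq_nonneg: "epos \<theta> \<Longrightarrow> wsq \<theta> D \<ge> 0"
  unfolding wsq_def epos_def by (intro mult_nonneg_nonneg sum_nonneg) (auto intro: less_imp_le)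


lemma varineq:
  fixes F :: "'a::real_vector \<Rightarrow> real"
  assumes cvx: "convex_on UNIV F" and opt: "\<And>y. F x1 + q x1 \<le> F y + q y"
    and qe: "\<And>t. q (x1 + t *\<^sub>R d) = q x1 + t * L + t^2 * Q" and Q: "Q \<ge> 0"
  shows "F (x1 + d) - F x1 + L \<ge> 0"
proof (rule ccontr)
  define a where "a = F (x1 + d) - F x1 + L"
  assume "\<not> F (x1 + d) - F x1 + L \<ge> 0"
  hence a: "a < 0" by (simp add: a_def)
  define t where "t = min (1/2) (- a / (2*Q + 1))"
  have pos: "2*Q + 1 > 0" using Q by simp
  have t0: "0 < t" "t < 1" using a pos by (auto simp: t_def divide_neg_pos)
  have "F (x1 + t *\<^sub>R d) = F ((1 - t) *\<^sub>R x1 + t *\<^sub>R (x1 + d))"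
    by (simp add: algebra_simps)
  also have "\<dots> \<le> (1 - t) * F x1 + t * F (x1 + d)"
    using convex_onD[OF cvx, of t x1 "x1 + d"] t0 by simp
  finally have c: "F (x1 + t *\<^sub>R d) \<le> (1 - t) * F x1 + t * F (x1 + d)" .
  have o: "F x1 + q x1 \<le> F (x1 + t *\<^sub>R d) + q (x1 + t *\<^sub>R d)" by (rule opt)
  have "0 \<le> t * a + t^2 * Q" using c o qe[of t] unfolding a_def by (simp add: algebra_simps)
  also have "t * a + t^2 * Q = t * (a + t * Q)" by (simp add: power2_eq_square algebra_simps)
  finally have "0 \<le> t * (a + t * Q)" .
  hence h1: "0 \<le> a + t * Q" using t0 by (simp add: zero_le_mult_iff)
  have "t \<le> - a / (2*Q + 1)" by (simp add: t_def)
  hence h2: "t * Q \<le> (- a / (2*Q + 1)) * Q" using Q by (rule mult_right_mono)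
  have "Q / (2*Q + 1) < 1" using pos Q by simp
  hence "(- a) * (Q / (2*Q + 1)) < (- a) * 1" using a by (intro mult_strict_left_mono) auto
  hence h3: "(- a / (2*Q + 1)) * Q < - a" by simp
  show False using h1 h2 h3 by linarith
qed
theorem lemma1:
  fixes A :: "real^'d::finite^'m::finite" and X :: "real^'n::finite^'m"
    and f :: "real^'n^'d \<Rightarrow> real" and g :: "real^'n^'m \<Rightarrow> real"
    and Zs :: "nat \<Rightarrow> real^'n^'d" and Es Ls :: "nat \<Rightarrow> real^'n^'m"
    and W :: "nat \<Rightarrow> real^'d^'m" and \<theta> :: "nat \<Rightarrow> real^'n^'d" and \<beta> :: "nat \<Rightarrow> real^'n^'m"
    and k :: nat and Z :: "real^'n^'d" and E L :: "real^'n^'m"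
  assumes f_cvx: "convex_on UNIV f" and g_cvx: "convex_on UNIV g"
    and \<theta>_pos: "\<And>k. epos (\<theta> k)" and \<beta>_pos: "\<And>k. epos (\<beta> k)"
    and Z_step: "\<And>k Z'. f (Zs (Suc k)) + wsq (\<theta> k) (Zs (Suc k) - Zs k
              + erecip (\<theta> k) \<odot> (transpose (W k) ** (Ls k + \<beta> k \<odot> (A ** Zs k + Es k - X))))
            \<le> f Z' + wsq (\<theta> k) (Z' - Zs k
              + erecip (\<theta> k) \<odot> (transpose (W k) ** (Ls k + \<beta> k \<odot> (A ** Zs k + Es k - X))))"
    and E_step: "\<And>k E'. g (Es (Suc k)) + wsq (\<beta> k) (Es (Suc k) - X + A ** Zs (Suc k) + erecip (\<beta> k) \<odot> Ls k)
            \<le> g E' + wsq (\<beta> k) (E' - X + A ** Zs (Suc k) + erecip (\<beta> k) \<odot> Ls k)"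
    and L_step: "\<And>k. Ls (Suc k) = Ls k + \<beta> k \<odot> (A ** Zs (Suc k) + Es (Suc k) - X)"
  shows "let \<omega> = (Z, E, - L); \<omega>k = (Zs k, Es k, - Ls k); \<omega>k1 = (Zs (Suc k), Es (Suc k), - Ls (Suc k))
         in (f Z + g E) - (f (Zs (Suc k)) + g (Es (Suc k)))
            + (\<omega> - \<omega>k1) \<bullet> (Fop (W k) A X \<omega>k1 + Gop (W k) (\<beta> k) (Es k - Es (Suc k))
                           + Hop (W k) (\<theta> k) (\<beta> k) A (\<omega>k1 - \<omega>k)) \<ge> 0"
proof -
  define Z0 where "Z0 = Zs k"
  define Z1 where "Z1 = Zs (Suc k)"
  define E0 where "E0 = Es k"
  define E1 where "E1 = Es (Suc k)"
  define L0 where "L0 = Ls k"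
  define L1 where "L1 = Ls (Suc k)"
  define V where "V = transpose (W k) ** (L0 + \<beta> k \<odot> (A ** Z0 + E0 - X))"
  have L1e: "L1 = L0 + \<beta> k \<odot> (A ** Z1 + E1 - X)" using L_step unfolding L1_def L0_def Z1_def E1_def by simp
  have IZ: "f (Z1 + (Z - Z1)) - f Z1 + (\<theta> k \<odot> (Z1 - Z0 + erecip (\<theta> k) \<odot> V)) \<bullet> (Z - Z1) \<ge> 0"
  proof (rule varineq[where q = "\<lambda>Y. wsq (\<theta> k) (Y - Z0 + erecip (\<theta> k) \<odot> V)" and Q = "wsq (\<theta> k) (Z - Z1)"])
    show "convex_on UNIV f" by (rule f_cvx)
    show "\<And>y. f Z1 + wsq (\<theta> k) (Z1 - Z0 + erecip (\<theta> k) \<odot> V) \<le> f y + wsq (\<theta> k) (y - Z0 + erecip (\<theta> k) \<odot> V)"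
      using Z_step unfolding Z1_def Z0_def V_def L0_def E0_def by blast
    show "0 \<le> wsq (\<theta> k) (Z - Z1)" by (rule wsq_nonneg[OF \<theta>_pos])
    fix t :: real
    have eqz: "Z1 + t *\<^sub>R (Z - Z1) - Z0 + erecip (\<theta> k) \<odot> V = (Z1 - Z0 + erecip (\<theta> k) \<odot> V) + t *\<^sub>R (Z - Z1)"
      by (simp add: algebra_simps)
    show "wsq (\<theta> k) (Z1 + t *\<^sub>R (Z - Z1) - Z0 + erecip (\<theta> k) \<odot> V) =
      wsq (\<theta> k) (Z1 - Z0 + erecip (\<theta> k) \<odot> V) + t * ((\<theta> k \<odot> (Z1 - Z0 + erecip (\<theta> k) \<odot> V)) \<bullet> (Z - Z1)) + t^2 * wsq (\<theta> k) (Z - Z1)"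
      unfolding eqz by (rule wsq_expand)
  qed
  define c where "c = - X + A ** Z1 + erecip (\<beta> k) \<odot> L0"
  have IE: "g (E1 + (E - E1)) - g E1 + (\<beta> k \<odot> (E1 + c)) \<bullet> (E - E1) \<ge> 0"
  proof (rule varineq[where q = "\<lambda>Y. wsq (\<beta> k) (Y + c)" and Q = "wsq (\<beta> k) (E - E1)"])
    show "convex_on UNIV g" by (rule g_cvx)
    show "\<And>y. g E1 + wsq (\<beta> k) (E1 + c) \<le> g y + wsq (\<beta> k) (y + c)"
      using E_step unfolding E1_def Z1_def L0_def c_def by (simp add: algebra_simps)
    show "0 \<le> wsq (\<beta> k) (E - E1)" by (rule wsq_nonneg[OF \<beta>_pos])
    fix t :: real
    have eqe: "E1 + t *\<^sub>R (E - E1) + c = (E1 + c) + t *\<^sub>R (E - E1)"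
      by (simp add: algebra_simps)
    show "wsq (\<beta> k) (E1 + t *\<^sub>R (E - E1) + c) =
      wsq (\<beta> k) (E1 + c) + t * ((\<beta> k \<odot> (E1 + c)) \<bullet> (E - E1)) + t^2 * wsq (\<beta> k) (E - E1)"
      unfolding eqe by (rule wsq_expand)
  qed
  have cZ: "transpose (W k) ** (- (- L1)) + transpose (W k) ** (\<beta> k \<odot> (E0 - E1))
     + Dop (W k) (\<theta> k) (\<beta> k) A (Z1 - Z0) = \<theta> k \<odot> (Z1 - Z0 + erecip (\<theta> k) \<odot> V)"
    unfolding Dop_def V_def L1e
    by (simp add: had_add_right had_diff_right had_erecip1[OF \<theta>_pos] matrix_add_ldistrib mm_diff algebra_simps)
  have cE: "- (- L1) + \<beta> k \<odot> (E0 - E1) + \<beta> k \<odot> (E1 - E0) = \<beta> k \<odot> (E1 + c)"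
    unfolding c_def L1e
    by (simp add: had_add_right had_diff_right had_minus_right had_erecip1[OF \<beta>_pos] algebra_simps)
  have cL: "A ** Z1 + E1 - X + 0 + erecip (\<beta> k) \<odot> (- L1 - - L0) = 0"
    unfolding L1e
    by (simp add: had_add_right had_diff_right had_minus_right had_erecip2[OF \<beta>_pos] algebra_simps)
  show ?thesis
    unfolding Let_def Z0_def[symmetric] Z1_def[symmetric] E0_def[symmetric] E1_def[symmetric]
      L0_def[symmetric] L1_def[symmetric]
    unfolding Fop_def Gop_def Hop_def
    using IZ IE cZ cE cL by (simp add: algebra_simps inner_commute[of "\<theta> k \<odot> _"] inner_commute[of "\<beta> k \<odot> _"])
qed

end
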